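(* For every history formula $\varphi$ of CTL*KΔ, every model $M$, every history $h$ of $M$ and every observation record $r$ that stops at $h$: $$h,r\models\varphi\quad\text{iff}\quad \mathit{last}(h),\ \mathit{IS}(h,r),\ o(h,r)\models_I\varphi.$$
   Context: Fix a countably infinite set $\mathit{AP}$ of atomic propositions and a finite nonempty set $\mathit{Obs}$ of observations. For a word $w$ we write $w_i$ for its letter at position $i$ (positions start at $0$), $w_{\le i}$ for its prefix ending at position $i$, $w_{\ge i}$ for its suffix starting at position $i$, $|w|$ for the length of a finite word, and $\mathit{last}(w)$ for the last letter of a finite word; $w\preceq w'$ means $w$ is a prefix of $w'$. Syntax of CTL*KΔ (single agent): history formulas $\varphi::=p\mid\neg\varphi\mid\varphi\wedge\varphi\mid\mathbf A\psi\mid\mathbf K\varphi\mid\Delta^{o}\varphi$ and path formulas $\psi::=\varphi\mid\neg\psi\mid\psi\wedge\psi\mid\mathbf X\psi\mid\psi\,\mathbf U\,\psi$, with $p\in\mathit{AP}$ and $o\in\mathit{Obs}$; the formulas of the logic are the history formulas. A model is $M=(\mathit{AP}_f,S,T,V,\{\sim_o\}_{o\in\mathit{Obs}},s_\iota,o_\iota)$ where $\mathit{AP}_f\subseteq\mathit{AP}$ is finite, $S$ is a finite set of states, $T\subseteq S\times S$ is left-total, $V:S\to 2^{\mathit{AP}_f}$, each $\sim_o$ is an equivalence relation on $S$, $s_\iota\in S$ and $o_\iota\in\mathit{Obs}$. A path is an infinite sequence $\pi=s_0s_1\dots$ of states with $s_i\,T\,s_{i+1}$ for all $i$ (starting at any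 state); a history is a finite nonempty prefix of a path. An observation record is a finite word over $\mathit{Obs}\times\mathbb N$; $\epsilon$ is the empty record, $r\cdot(o,n)$ is $r$ with $(o,n)$ appended, and $r_{=n}$ is the subword of $r$ consisting of the pairs whose second component is $n$. The record $r$ stops at $n$ if $r_{=m}$ is empty for all $m>n$, and stops at a history $h$ if it stops at $|h|-1$. The list $\mathit{ol}(r,n)$ is defined by $\mathit{ol}(r,0)=o_\iota\cdot o_1\cdots o_k$ if $r_{=0}=(o_1,0)\cdots(o_k,0)$, and $\mathit{ol}(r,n+1)=\mathit{last}(\mathit{ol}(r,n))\cdot o_1\cdots o_k$ if $r_{=n+1}=(o_1,n+1)\cdots(o_k,n+1)$. Two histories are equivalent, $h\approx_r h'$, if $|h|=|h'|$ and for every $i<|h|$ and every $o$ occurring in $\mathit{ol}(r,i)$, $h_i\sim_o h'_i$. Natural semantics: for a history $h$ and record $r$: $h,r\models p$ iff $p\in V(\mathit{last}(h))$; $h,r\models\neg\varphi$ iff not $h,r\models\varphi$; $h,r\models\varphi_1\wedge\varphi_2$ iff both hold; $h,r\models\mathbf A\psi$ iff for all paths $\pi$ with $h\preceq\pi$, $\pi,|h|-1,r\models\psi$; $h,r\models\mathbf K\varphi$ iff $h',r\models\varphi$ for all histories $h'$ with $h'\approx_r h$; $h,r\models\Delta^o\varphi$ iff $h,r\cdot(o,|h|-1)\models\varphi$. For a path $\pi$, $n\in\mathbb N$ and record $r$: $\pi,n,r\models\varphi$ iff $\pi_{\le n},r\models\varphi$; negation and conjunction as usual; $\pi,n,r\models\mathbf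 X\psi$ iff $\pi,n+1,r\models\psi$; $\pi,n,r\models\psi_1\mathbf U\psi_2$ iff there is $m\ge n$ with $\pi,m,r\models\psi_2$ and $\pi,k,r\models\psi_1$ for all $n\le k<m$. For $I\subseteq S$, $T(I)=\{s'\mid\exists s\in I,\ s\,T\,s'\}$; $[s]_o=\{s'\mid s\sim_o s'\}$. The information set is $\mathit{IS}(h,r)=\{\mathit{last}(h')\mid h'\text{ a history with }h'\approx_r h\}$. Updates: $U_T(I,s',o)=T(I)\cap[s']_o$ and $U_\Delta(I,s,o')=I\cap[s]_{o'}$. $o(h,r)$ denotes the last element of $\mathit{ol}(r,|h|-1)$. Alternative semantics, for $s\in S$, $I\subseteq S$, $o\in\mathit{Obs}$: $s,I,o\models_I p$ iff $p\in V(s)$; negation and conjunction as usual; $s,I,o\models_I\mathbf A\psi$ iff for every path $\pi$ with $\pi_0=s$, $\pi,I,o\models_I\psi$; $s,I,o\models_I\mathbf K\varphi$ iff $s',I,o\models_I\varphi$ for all $s'\in I$; $s,I,o\models_I\Delta^{o'}\varphi$ iff $s,U_\Delta(I,s,o'),o'\models_I\varphi$. For a path $\pi$: $\pi,I,o\models_I\varphi$ iff $\pi_0,I,o\models_I\varphi$; negation and conjunction as usual; $\pi,I,o\models_I\mathbf X\psi$ iff $\pi_{\ge1},U_T(I,\pi_1,o),o\models_I\psi$; $\pi,I,o\models_I\psi_1\mathbf U\psi_2$ iff there is $n\ge0$ with $\pi_{\ge n},U_T^n(I,\pi,o),o\models_I\psi_2$ and $\pi_{\ge m},U_T^m(I,\pi,o),o\models_I\psi_1$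 for all $0\le m<n$, where $U_T^0(I,\pi,o)=I$ and $U_T^{n+1}(I,\pi,o)=U_T(U_T^n(I,\pi,o),\pi_{n+1},o)$. *)

theory Defs
  imports Main
begin

datatype 'o hform =
    Prop nat
  | HNot "'o hform"
  | HAnd "'o hform" "'o hform"
  | Aq "'o pform"
  | Kn "'o hform"
  | Delta 'o "'o hform"
and 'o pform =
    Hist "'o hform"
  | PNot "'o pform"
  | PAnd "'o pform" "'o pform"
  | Nx "'o pform"
  | Until "'o pform" "'o pform"

record ('s, 'o) model =
  APf :: "nat set"
  St :: "'s set"
  Tr :: "('s \<times> 's) set"
  Val :: "'s \<Rightarrow> nat set"
  Sim :: "'o \<Rightarrow> ('s \<times> 's) set"
  sinit :: 's
  oinit :: 'o

definition wf_model :: "('s, 'o::finite) model \<Rightarrow> bool" where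
  "wf_model M \<longleftrightarrow>
     finite (APf M) \<and> finite (St M) \<and>
     Tr M \<subseteq> St M \<times> St M \<and> (\<forall>s\<in>St M. \<exists>s'. (s, s') \<in> Tr M) \<and>
     (\<forall>s\<in>St M. Val M s \<subseteq> APf M) \<and>
     (\<forall>ob. equiv (St M) (Sim M ob)) \<and>
     sinit M \<in> St M"

definition is_path :: "('s, 'o) model \<Rightarrow> (nat \<Rightarrow> 's) \<Rightarrow> bool" where
  "is_path M \<pi> \<longleftrightarrow> (\<forall>i. \<pi> i \<in> St M \<and> (\<pi> i, \<pi> (Suc i)) \<in> Tr M)"

definition is_history :: "('s, 'o) model \<Rightarrow> 's list \<Rightarrow> bool" where
  "is_history M h \<longleftrightarrow> (\<exists>\<pi>. is_path M \<pi> \<and> h \<noteq> [] \<and> (\<forall>i<length h. h ! i = \<pi> i))"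

definition hprefix :: "'s list \<Rightarrow> (nat \<Rightarrow> 's) \<Rightarrow> bool" where
  "hprefix h \<pi> \<longleftrightarrow> (\<forall>i<length h. \<pi> i = h ! i)"

definition path_upto :: "(nat \<Rightarrow> 's) \<Rightarrow> nat \<Rightarrow> 's list" where
  "path_upto \<pi> n = map \<pi> [0..<Suc n]"

type_synonym 'o obs_record = "('o \<times> nat) list"

definition rec_at :: "'o obs_record \<Rightarrow> nat \<Rightarrow> 'o obs_record" where
  "rec_at r n = filter (\<lambda>p. snd p = n) r"

definition stops_at :: "'o obs_record \<Rightarrow> nat \<Rightarrow> bool" where
  "stops_at r n \<longleftrightarrow> (\<forall>m>n. rec_at r m = [])"

definition stops_at_hist :: "'o obs_record \<Rightarrow> 's list \<Rightarrow> bool" where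
  "stops_at_hist r h \<longleftrightarrow> stops_at r (length h - 1)"

fun ol :: "('s, 'o) model \<Rightarrow> 'o obs_record \<Rightarrow> nat \<Rightarrow> 'o list" where
  "ol M r 0 = oinit M # map fst (rec_at r 0)"
| "ol M r (Suc n) = last (ol M r n) # map fst (rec_at r (Suc n))"

definition hequiv :: "('s, 'o) model \<Rightarrow> 'o obs_record \<Rightarrow> 's list \<Rightarrow> 's list \<Rightarrow> bool" where
  "hequiv M r h h' \<longleftrightarrow> length h = length h' \<and>
     (\<forall>i<length h. \<forall>ob\<in>set (ol M r i). (h ! i, h' ! i) \<in> Sim M ob)"

fun hsat :: "('s, 'o) model \<Rightarrow> 's list \<Rightarrow> 'o obs_record \<Rightarrow> 'o hform \<Rightarrow> bool"
and psat :: "('s, 'o) model \<Rightarrow> (nat \<Rightarrow> 's) \<Rightarrow> nat \<Rightarrow> 'o obs_record \<Rightarrow> 'o pform \<Rightarrow> bool" where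
  "hsat M h r (Prop p) = (p \<in> Val M (last h))"
| "hsat M h r (HNot \<phi>) = (\<not> hsat M h r \<phi>)"
| "hsat M h r (HAnd \<phi>1 \<phi>2) = (hsat M h r \<phi>1 \<and> hsat M h r \<phi>2)"
| "hsat M h r (Aq \<psi>) = (\<forall>\<pi>. is_path M \<pi> \<and> hprefix h \<pi> \<longrightarrow> psat M \<pi> (length h - 1) r \<psi>)"
| "hsat M h r (Kn \<phi>) = (\<forall>h'. is_history M h' \<and> hequiv M r h' h \<longrightarrow> hsat M h' r \<phi>)"
| "hsat M h r (Delta ob \<phi>) = hsat M h (r @ [(ob, length h - 1)]) \<phi>"
| "psat M \<pi> n r (Hist \<phi>) = hsat M (path_upto \<pi> n) r \<phi>"
| "psat M \<pi> n r (PNot \<psi>) = (\<not> psat M \<pi> n r \<psi>)"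
| "psat M \<pi> n r (PAnd \<psi>1 \<psi>2) = (psat M \<pi> n r \<psi>1 \<and> psat M \<pi> n r \<psi>2)"
| "psat M \<pi> n r (Nx \<psi>) = psat M \<pi> (Suc n) r \<psi>"
| "psat M \<pi> n r (Until \<psi>1 \<psi>2) =
     (\<exists>m\<ge>n. psat M \<pi> m r \<psi>2 \<and> (\<forall>k. n \<le> k \<and> k < m \<longrightarrow> psat M \<pi> k r \<psi>1))"

definition Timg :: "('s, 'o) model \<Rightarrow> 's set \<Rightarrow> 's set" where
  "Timg M I = {s'. \<exists>s\<in>I. (s, s') \<in> Tr M}"

definition cls :: "('s, 'o) model \<Rightarrow> 's \<Rightarrow> 'o \<Rightarrow> 's set" where
  "cls M s ob = {s'. (s, s') \<in> Sim M ob}"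

definition UT :: "('s, 'o) model \<Rightarrow> 's set \<Rightarrow> 's \<Rightarrow> 'o \<Rightarrow> 's set" where
  "UT M I s' ob = Timg M I \<inter> cls M s' ob"

definition UD :: "('s, 'o) model \<Rightarrow> 's set \<Rightarrow> 's \<Rightarrow> 'o \<Rightarrow> 's set" where
  "UD M I s ob' = I \<inter> cls M s ob'"

fun UTn :: "('s, 'o) model \<Rightarrow> nat \<Rightarrow> 's set \<Rightarrow> (nat \<Rightarrow> 's) \<Rightarrow> 'o \<Rightarrow> 's set" where
  "UTn M 0 I \<pi> ob = I"
| "UTn M (Suc n) I \<pi> ob = UT M (UTn M n I \<pi> ob) (\<pi> (Suc n)) ob"

definition suffix_from :: "(nat \<Rightarrow> 's) \<Rightarrow> nat \<Rightarrow> (nat \<Rightarrow> 's)" where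
  "suffix_from \<pi> n = (\<lambda>i. \<pi> (i + n))"

fun isat :: "('s, 'o) model \<Rightarrow> 's \<Rightarrow> 's set \<Rightarrow> 'o \<Rightarrow> 'o hform \<Rightarrow> bool"
and ipsat :: "('s, 'o) model \<Rightarrow> (nat \<Rightarrow> 's) \<Rightarrow> 's set \<Rightarrow> 'o \<Rightarrow> 'o pform \<Rightarrow> bool" where
  "isat M s I ob (Prop p) = (p \<in> Val M s)"
| "isat M s I ob (HNot \<phi>) = (\<not> isat M s I ob \<phi>)"
| "isat M s I ob (HAnd \<phi>1 \<phi>2) = (isat M s I ob \<phi>1 \<and> isat M s I ob \<phi>2)"
| "isat M s I ob (Aq \<psi>) = (\<forall>\<pi>. is_path M \<pi> \<and> \<pi> 0 = s \<longrightarrow> ipsat M \<pi> I ob \<psi>)"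
| "isat M s I ob (Kn \<phi>) = (\<forall>s'\<in>I. isat M s' I ob \<phi>)"
| "isat M s I ob (Delta ob' \<phi>) = isat M s (UD M I s ob') ob' \<phi>"
| "ipsat M \<pi> I ob (Hist \<phi>) = isat M (\<pi> 0) I ob \<phi>"
| "ipsat M \<pi> I ob (PNot \<psi>) = (\<not> ipsat M \<pi> I ob \<psi>)"
| "ipsat M \<pi> I ob (PAnd \<psi>1 \<psi>2) = (ipsat M \<pi> I ob \<psi>1 \<and> ipsat M \<pi> I ob \<psi>2)"
| "ipsat M \<pi> I ob (Nx \<psi>) = ipsat M (suffix_from \<pi> 1) (UT M I (\<pi> 1) ob) ob \<psi>"
| "ipsat M \<pi> I ob (Until \<psi>1 \<psi>2) =
     (\<exists>n. ipsat M (suffix_from \<pi> n) (UTn M n I \<pi> ob) ob \<psi>2 \<and>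
        (\<forall>m<n. ipsat M (suffix_from \<pi> m) (UTn M m I \<pi> ob) ob \<psi>1))"

definition IS :: "('s, 'o) model \<Rightarrow> 's list \<Rightarrow> 'o obs_record \<Rightarrow> 's set" where
  "IS M h r = {last h' | h'. is_history M h' \<and> hequiv M r h' h}"

definition obs_of :: "('s, 'o) model \<Rightarrow> 's list \<Rightarrow> 'o obs_record \<Rightarrow> 'o" where
  "obs_of M h r = last (ol M r (length h - 1))"

end

theory Submission
  imports Defs
begin

lemma wf_sym: "wf_model M \<Longrightarrow> (a,b) \<in> Sim M ob \<Longrightarrow> (b,a) \<in> Sim M ob"
  unfolding wf_model_def equiv_def by (meson symD)

lemma wf_trans: "wf_model M \<Longrightarrow> (a,b) \<in> Sim M ob \<Longrightarrow> (b,c) \<in> Sim M ob \<Longrightarrow> (a,c) \<in> Sim M ob"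
  unfolding wf_model_def equiv_def by (meson transD)

lemma wf_Tr: "wf_model M \<Longrightarrow> (a,b) \<in> Tr M \<Longrightarrow> a \<in> St M \<and> b \<in> St M"
  unfolding wf_model_def by blast

lemma exists_path:
  assumes wf: "wf_model M" and x: "x \<in> St M"
  shows "\<exists>\<pi>. is_path M \<pi> \<and> \<pi> 0 = x"
proof -
  define f where "f = (\<lambda>s. SOME s'. (s,s') \<in> Tr M)"
  have step: "\<And>s. s \<in> St M \<Longrightarrow> (s, f s) \<in> Tr M \<and> f s \<in> St M"
  proof -
    fix s assume "s \<in> St M"
    then have "\<exists>s'. (s,s') \<in> Tr M" using wf unfolding wf_model_def by blast
    then have "(s, f s) \<in> Tr M" unfolding f_def by (rule someI_ex)
    then show "(s, f s) \<in> Tr M \<and> f s \<in> St M" using wf_Tr[OF wf] by blast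
  qed
  define \<pi> where "\<pi> i = (f ^^ i) x" for i
  have inS: "\<pi> i \<in> St M" for i
    by (induction i) (auto simp: \<pi>_def x step)
  have "is_path M \<pi>"
    unfolding is_path_def using inS step by (auto simp: \<pi>_def)
  moreover have "\<pi> 0 = x" by (simp add: \<pi>_def)
  ultimately show ?thesis by blast
qed

definition ext :: "'s list \<Rightarrow> (nat \<Rightarrow> 's) \<Rightarrow> nat \<Rightarrow> 's" where
  "ext h \<pi>0 i = (if i < length h - 1 then h ! i else \<pi>0 (i - (length h - 1)))"

lemma path_extend:
  assumes "h \<noteq> []" and St: "\<forall>i<length h. h!i \<in> St M"
    and T: "\<forall>i. Suc i < length h \<longrightarrow> (h!i, h!Suc i) \<in> Tr M"
    and p: "is_path M \<pi>0" and p0: "\<pi>0 0 = last h"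
  shows "is_path M (ext h \<pi>0) \<and> hprefix h (ext h \<pi>0) \<and> suffix_from (ext h \<pi>0) (length h - 1) = \<pi>0"
proof (intro conjI)
  have lastn: "last h = h ! (length h - 1)" using assms(1) by (simp add: last_conv_nth)
  show "is_path M (ext h \<pi>0)"
    unfolding is_path_def
  proof (intro allI conjI)
    fix i
    show "ext h \<pi>0 i \<in> St M" using St p unfolding ext_def is_path_def by auto
    show "(ext h \<pi>0 i, ext h \<pi>0 (Suc i)) \<in> Tr M"
    proof (cases "Suc i < length h - 1")
      case True then show ?thesis using T by (auto simp: ext_def)
    next
      case F: False
      show ?thesis
      proof (cases "i < length h - 1")
        case True
        then have e: "Suc i = length h - 1" using F by simp
        then have "Suc i < length h" by simp
        then have "(h!i, h!Suc i) \<in> Tr M" using T by simp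
        then show ?thesis using e True p0 lastn by (simp add: ext_def)
      next
        case False
        then have "Suc i - (length h - 1) = Suc (i - (length h - 1))" by simp
        then show ?thesis using False p unfolding ext_def is_path_def by auto
      qed
    qed
  qed
  show "hprefix h (ext h \<pi>0)"
    unfolding hprefix_def
  proof (intro allI impI)
    fix i assume i: "i < length h"
    show "ext h \<pi>0 i = h ! i"
    proof (cases "i < length h - 1")
      case True then show ?thesis by (simp add: ext_def)
    next
      case False
      then have "i = length h - 1" using i by simp
      then show ?thesis using p0 lastn by (simp add: ext_def)
    qed
  qed
  show "suffix_from (ext h \<pi>0) (length h - 1) = \<pi>0"
    unfolding suffix_from_def ext_def by auto
qed

lemma hist_char:
  assumes wf: "wf_model M"
  shows "is_history M h \<longleftrightarrow> h \<noteq> [] \<and> (\<forall>i<length h. h!i \<in> St M) \<and>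
           (\<forall>i. Suc i < length h \<longrightarrow> (h!i, h!Suc i) \<in> Tr M)"
proof
  assume "is_history M h"
  then obtain \<pi> where "is_path M \<pi>" "h \<noteq> []" "\<forall>i<length h. h ! i = \<pi> i"
    unfolding is_history_def by blast
  then show "h \<noteq> [] \<and> (\<forall>i<length h. h!i \<in> St M) \<and> (\<forall>i. Suc i < length h \<longrightarrow> (h!i, h!Suc i) \<in> Tr M)"
    unfolding is_path_def by auto
next
  assume a: "h \<noteq> [] \<and> (\<forall>i<length h. h!i \<in> St M) \<and> (\<forall>i. Suc i < length h \<longrightarrow> (h!i, h!Suc i) \<in> Tr M)"
  then have "last h \<in> St M" by (simp add: last_conv_nth)
  then obtain \<pi>0 where "is_path M \<pi>0" "\<pi>0 0 = last h" using exists_path[OF wf] by blast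
  with a have "is_path M (ext h \<pi>0) \<and> hprefix h (ext h \<pi>0)"
    using path_extend[of h M \<pi>0] by blast
  then show "is_history M h" using a unfolding is_history_def hprefix_def by metis
qed

lemma hist_append:
  assumes wf: "wf_model M" and ne: "h \<noteq> []"
  shows "is_history M (h @ [x]) \<longleftrightarrow> is_history M h \<and> (last h, x) \<in> Tr M"
proof -
  have lastn: "last h = h ! (length h - 1)" using ne by (simp add: last_conv_nth)
  show ?thesis
  proof
    assume H: "is_history M (h @ [x])"
    then have c: "(\<forall>i<Suc (length h). (h@[x])!i \<in> St M) \<and>
           (\<forall>i. Suc i < Suc (length h) \<longrightarrow> ((h@[x])!i, (h@[x])!Suc i) \<in> Tr M)"
      using hist_char[OF wf] by simp
    have "is_history M h" unfolding hist_char[OF wf]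
    proof (intro conjI allI impI)
      show "h \<noteq> []" by fact
      fix i assume "i < length h" then show "h ! i \<in> St M" using c
        by (metis less_SucI nth_append)
    next
      fix i assume "Suc i < length h" then show "(h ! i, h ! Suc i) \<in> Tr M" using c
        by (metis Suc_lessD less_SucI nth_append)
    qed
    moreover have "(last h, x) \<in> Tr M"
      using c[THEN conjunct2, rule_format, of "length h - 1"] ne lastn
      by (simp add: nth_append)
    ultimately show "is_history M h \<and> (last h, x) \<in> Tr M" by blast
  next
    assume a: "is_history M h \<and> (last h, x) \<in> Tr M"
    then have c: "(\<forall>i<length h. h!i \<in> St M) \<and> (\<forall>i. Suc i < length h \<longrightarrow> (h!i, h!Suc i) \<in> Tr M)"
      using hist_char[OF wf] by blast
    have xS: "x \<in> St M" using a wf_Tr[OF wf] by blast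
    show "is_history M (h @ [x])" unfolding hist_char[OF wf]
    proof (intro conjI allI impI)
      show "h @ [x] \<noteq> []" by simp
      fix i assume "i < length (h @ [x])" then show "(h @ [x]) ! i \<in> St M" using c xS
        by (auto simp: nth_append less_Suc_eq)
    next
      fix i assume i: "Suc i < length (h @ [x])"
      show "((h @ [x]) ! i, (h @ [x]) ! Suc i) \<in> Tr M"
      proof (cases "Suc i < length h")
        case True then show ?thesis using c by (simp add: nth_append)
      next
        case False
        then have e: "i = length h - 1" using i by simp
        then show ?thesis using a lastn ne by (simp add: nth_append)
      qed
    qed
  qed
qed

lemma rec_at_app: "rec_at (r @ [(ob,N)]) i = rec_at r i @ (if i = N then [(ob,N)] else [])"
  by (simp add: rec_at_def)

lemma ol_app_less: "i < N \<Longrightarrow> ol M (r@[(ob,N)]) i = ol M r i"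
  by (induction i) (auto simp: rec_at_app)

lemma ol_app_eq: "ol M (r@[(ob,N)]) N = ol M r N @ [ob]"
  by (cases N) (auto simp: rec_at_app ol_app_less)

lemma hequiv_delta:
  assumes "h \<noteq> []"
  shows "hequiv M (r@[(ob,length h - 1)]) h' h \<longleftrightarrow> hequiv M r h' h \<and> (last h', last h) \<in> Sim M ob"
proof -
  let ?N = "length h - 1"
  have ol: "\<And>i. i < length h \<Longrightarrow> set (ol M (r@[(ob,?N)]) i) = set (ol M r i) \<union> (if i = ?N then {ob} else {})"
    by (auto simp: ol_app_less ol_app_eq)
  show ?thesis
  proof
    assume H: "hequiv M (r@[(ob,?N)]) h' h"
    then have L: "length h' = length h" by (simp add: hequiv_def)
    have "hequiv M r h' h" using H ol unfolding hequiv_def by auto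
    moreover have "(h' ! ?N, h ! ?N) \<in> Sim M ob" using H ol[of ?N] assms unfolding hequiv_def by auto
    moreover have "h' \<noteq> []" using L assms by auto
    then have "last h' = h' ! ?N" using L by (simp add: last_conv_nth)
    moreover have "last h = h ! ?N" using assms by (simp add: last_conv_nth)
    ultimately show "hequiv M r h' h \<and> (last h', last h) \<in> Sim M ob"
      by simp
  next
    assume H: "hequiv M r h' h \<and> (last h', last h) \<in> Sim M ob"
    then have L: "length h' = length h" by (simp add: hequiv_def)
    moreover have "h' \<noteq> []" using L assms by auto
    then have "last h' = h' ! ?N" using L by (simp add: last_conv_nth)
    moreover have "last h = h ! ?N" using assms by (simp add: last_conv_nth)
    ultimately have "(h' ! ?N, h ! ?N) \<in> Sim M ob" using H by simp
    then show "hequiv M (r@[(ob,?N)]) h' h" using H ol unfolding hequiv_def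
      by (auto split: if_splits)
  qed
qed

lemma IS_delta:
  assumes wf: "wf_model M" and "h \<noteq> []"
  shows "IS M h (r@[(ob,length h - 1)]) = UD M (IS M h r) (last h) ob"
proof -
  have "hequiv M (r@[(ob,length h - 1)]) h' h \<longleftrightarrow> hequiv M r h' h \<and> last h' \<in> cls M (last h) ob" for h'
  proof -
    have "(last h', last h) \<in> Sim M ob \<longleftrightarrow> (last h, last h') \<in> Sim M ob"
      using wf_sym[OF wf] by metis
    then show ?thesis using hequiv_delta[OF assms(2), of M r ob h'] unfolding cls_def by simp
  qed
  then show ?thesis unfolding IS_def UD_def by blast
qed

lemma obs_delta: "obs_of M h (r@[(ob,length h - 1)]) = ob"
  by (simp add: obs_of_def ol_app_eq)

lemma stops_delta: "stops_at r N \<Longrightarrow> stops_at (r@[(ob,N)]) N"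
  by (simp add: stops_at_def rec_at_app)

lemma ol_stop: "stops_at r n \<Longrightarrow> ol M r (Suc n) = [last (ol M r n)]"
  by (simp add: stops_at_def)

lemma stops_Suc: "stops_at r n \<Longrightarrow> stops_at r (Suc n)"
  by (simp add: stops_at_def)

lemma stops_add: "stops_at r n \<Longrightarrow> stops_at r (n + k)"
  by (simp add: stops_at_def)

lemma hequiv_snoc2:
  assumes "length h' = Suc n" "length h = Suc n" "stops_at r n"
  shows "hequiv M r (h'@[x]) (h@[s]) \<longleftrightarrow> hequiv M r h' h \<and> (x,s) \<in> Sim M (last (ol M r n))"
proof -
  have o: "ol M r (Suc n) = [last (ol M r n)]" using ol_stop[OF assms(3)] .
  define P where "P i = (\<forall>ob\<in>set (ol M r i). ((h'@[x]) ! i, (h@[s]) ! i) \<in> Sim M ob)" for i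
  have "(\<forall>i<Suc (Suc n). P i) \<longleftrightarrow> P (Suc n) \<and> (\<forall>i<Suc n. P i)"
    by (rule All_less_Suc)
  moreover have "P (Suc n) \<longleftrightarrow> (x,s) \<in> Sim M (last (ol M r n))"
    unfolding P_def o using assms(1,2) by (simp add: nth_append)
  moreover have "(\<forall>i<Suc n. P i) \<longleftrightarrow> (\<forall>i<Suc n. \<forall>ob\<in>set (ol M r i). (h' ! i, h ! i) \<in> Sim M ob)"
    unfolding P_def using assms(1,2) by (simp add: nth_append)
  ultimately show ?thesis using assms(1,2) unfolding hequiv_def P_def by auto
qed

lemma hequiv_snoc:
  assumes "length h = Suc n" "stops_at r n"
  shows "hequiv M r h'' (h@[s]) \<longleftrightarrow> (\<exists>h' x. h'' = h'@[x] \<and> hequiv M r h' h \<and> (x,s) \<in> Sim M (last (ol M r n)))"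
proof
  assume H: "hequiv M r h'' (h@[s])"
  then have L: "length h'' = Suc (Suc n)" using assms by (simp add: hequiv_def)
  then have "h'' = butlast h'' @ [last h'']"
    by (metis append_butlast_last_id list.size(3) nat.distinct(1))
  moreover have "length (butlast h'') = Suc n" using L by simp
  ultimately show "\<exists>h' x. h'' = h'@[x] \<and> hequiv M r h' h \<and> (x,s) \<in> Sim M (last (ol M r n))"
    using H hequiv_snoc2[OF _ assms(1,2)] by metis
next
  assume "\<exists>h' x. h'' = h'@[x] \<and> hequiv M r h' h \<and> (x,s) \<in> Sim M (last (ol M r n))"
  then obtain h' x where "h'' = h'@[x]" "hequiv M r h' h" "(x,s) \<in> Sim M (last (ol M r n))" by blast
  moreover then have "length h' = Suc n" using assms by (simp add: hequiv_def)
  ultimately show "hequiv M r h'' (h@[s])" using hequiv_snoc2[OF _ assms(1,2)] by blast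
qed

lemma IS_step:
  assumes wf: "wf_model M" and "length h = Suc n" "stops_at r n"
  shows "IS M (h@[s]) r = UT M (IS M h r) s (last (ol M r n))"
proof
  show "IS M (h@[s]) r \<subseteq> UT M (IS M h r) s (last (ol M r n))"
  proof
    fix y assume "y \<in> IS M (h@[s]) r"
    then obtain h'' where h'': "y = last h''" "is_history M h''" "hequiv M r h'' (h@[s])"
      unfolding IS_def by blast
    obtain h' x where hx: "h'' = h'@[x]" "hequiv M r h' h" "(x,s) \<in> Sim M (last (ol M r n))"
      using hequiv_snoc[OF assms(2,3)] h''(3) by blast
    have ne: "h' \<noteq> []" using assms(2) hx(2) by (auto simp: hequiv_def)
    have hh: "is_history M h' \<and> (last h', x) \<in> Tr M"
      using hist_append[OF wf ne, of x] h''(2) hx(1) by simp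
    then have "last h' \<in> IS M h r" using hx(2) unfolding IS_def by blast
    moreover have "(s,x) \<in> Sim M (last (ol M r n))" using wf_sym[OF wf hx(3)] .
    moreover have "y = x" using h''(1) hx(1) by simp
    ultimately show "y \<in> UT M (IS M h r) s (last (ol M r n))"
      unfolding UT_def Timg_def cls_def using hh by blast
  qed
next
  show "UT M (IS M h r) s (last (ol M r n)) \<subseteq> IS M (h@[s]) r"
  proof
    fix x assume "x \<in> UT M (IS M h r) s (last (ol M r n))"
    then obtain h' where h': "is_history M h'" "hequiv M r h' h" "(last h', x) \<in> Tr M"
        "(s,x) \<in> Sim M (last (ol M r n))"
      unfolding UT_def Timg_def cls_def IS_def by blast
    have ne: "h' \<noteq> []" using h'(1) unfolding is_history_def by blast
    have "is_history M (h'@[x])" using hist_append[OF wf ne, of x] h' by blast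
    moreover have "(x,s) \<in> Sim M (last (ol M r n))" using wf_sym[OF wf h'(4)] .
    then have "hequiv M r (h'@[x]) (h@[s])"
      using hequiv_snoc[OF assms(2,3)] h'(2) by blast
    moreover have "x = last (h'@[x])" by simp
    ultimately show "x \<in> IS M (h@[s]) r" unfolding IS_def by blast
  qed
qed

lemma path_upto_Suc: "path_upto \<pi> (Suc n) = path_upto \<pi> n @ [\<pi> (Suc n)]"
  by (simp add: path_upto_def)

lemma path_upto_len[simp]: "length (path_upto \<pi> n) = Suc n"
  by (simp add: path_upto_def)

lemma path_upto_last[simp]: "last (path_upto \<pi> n) = \<pi> n"
  by (simp add: path_upto_def)

lemma path_upto_hist: "is_path M \<pi> \<Longrightarrow> is_history M (path_upto \<pi> n)"
  unfolding is_history_def path_upto_def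
  by (intro exI[of _ \<pi>]) (auto simp del: upt_Suc)

lemma obs_upto: "obs_of M (path_upto \<pi> n) r = last (ol M r n)"
  by (simp add: obs_of_def)

lemma UTn_lemma:
  assumes wf: "wf_model M" and p: "is_path M \<pi>" and st: "stops_at r n"
  shows "UTn M k (IS M (path_upto \<pi> n) r) (suffix_from \<pi> n) (obs_of M (path_upto \<pi> n) r)
           = IS M (path_upto \<pi> (n+k)) r \<and>
         obs_of M (path_upto \<pi> (n+k)) r = obs_of M (path_upto \<pi> n) r"
proof (induction k)
  case 0 then show ?case by simp
next
  case (Suc k)
  have st': "stops_at r (n+k)" using stops_add[OF st] .
  have o: "obs_of M (path_upto \<pi> (n + Suc k)) r = obs_of M (path_upto \<pi> (n+k)) r"
    using ol_stop[OF st'] by (simp add: obs_upto)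
  have "IS M (path_upto \<pi> (Suc (n+k))) r = UT M (IS M (path_upto \<pi> (n+k)) r) (\<pi> (Suc (n+k))) (last (ol M r (n+k)))"
    unfolding path_upto_Suc using IS_step[OF wf _ st'] by simp
  then show ?case using Suc o by (simp add: obs_upto suffix_from_def add.commute)
qed

lemma hist_ne: "is_history M h \<Longrightarrow> h \<noteq> []"
  unfolding is_history_def by blast

lemma path_upto_prefix:
  assumes "hprefix h \<pi>" "h \<noteq> []"
  shows "path_upto \<pi> (length h - 1) = h"
  using assms unfolding hprefix_def path_upto_def
  by (intro nth_equalityI) (auto simp del: upt_Suc)

lemma hequiv_sym: "wf_model M \<Longrightarrow> hequiv M r a b \<Longrightarrow> hequiv M r b a"
  unfolding hequiv_def using wf_sym by metis

lemma hequiv_trans: "wf_model M \<Longrightarrow> hequiv M r a b \<Longrightarrow> hequiv M r b c \<Longrightarrow> hequiv M r a c"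
  unfolding hequiv_def using wf_trans by metis

lemma IS_cong: "wf_model M \<Longrightarrow> hequiv M r h' h \<Longrightarrow> IS M h' r = IS M h r"
  unfolding IS_def using hequiv_sym hequiv_trans by metis

lemma obs_cong: "hequiv M r h' h \<Longrightarrow> obs_of M h' r = obs_of M h r"
  by (simp add: hequiv_def obs_of_def)

lemma main:
  fixes M :: "('s, 'o::finite) model" and \<phi> :: "'o hform" and \<psi> :: "'o pform"
  assumes wf: "wf_model M"
  shows "\<forall>h (r::'o obs_record). is_history M h \<and> stops_at_hist r h \<longrightarrow>
           (hsat M h r \<phi> \<longleftrightarrow> isat M (last h) (IS M h r) (obs_of M h r) \<phi>)"
    and "\<forall>\<pi> n (r::'o obs_record). is_path M \<pi> \<and> stops_at r n \<longrightarrow>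
           (psat M \<pi> n r \<psi> \<longleftrightarrow> ipsat M (suffix_from \<pi> n) (IS M (path_upto \<pi> n) r) (obs_of M (path_upto \<pi> n) r) \<psi>)"
proof (induction \<phi> and \<psi>)
  case (Prop x)
  then show ?case by simp
next
  case (HNot x)
  then show ?case by simp
next
  case (HAnd x1 x2)
  then show ?case by simp
next
  case (Aq \<psi>)
  show ?case
  proof (intro allI impI)
    fix h and r :: "'o obs_record" assume a: "is_history M h \<and> stops_at_hist r h"
    let ?N = "length h - 1"
    have ne: "h \<noteq> []" using a hist_ne by blast
    have st: "stops_at r ?N" using a by (simp add: stops_at_hist_def)
    have hc: "(\<forall>i<length h. h!i \<in> St M) \<and> (\<forall>i. Suc i < length h \<longrightarrow> (h!i, h!Suc i) \<in> Tr M)"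
      using a hist_char[OF wf] by blast
    have lastn: "last h = h ! ?N" using ne by (simp add: last_conv_nth)
    have IH: "\<forall>\<pi> n (r::'o obs_record). is_path M \<pi> \<and> stops_at r n \<longrightarrow>
           (psat M \<pi> n r \<psi> \<longleftrightarrow> ipsat M (suffix_from \<pi> n) (IS M (path_upto \<pi> n) r) (obs_of M (path_upto \<pi> n) r) \<psi>)"
      using Aq wf by blast
    show "hsat M h r (Aq \<psi>) \<longleftrightarrow> isat M (last h) (IS M h r) (obs_of M h r) (Aq \<psi>)"
    proof
      assume H: "hsat M h r (Aq \<psi>)"
      show "isat M (last h) (IS M h r) (obs_of M h r) (Aq \<psi>)"
      proof (simp only: isat.simps, intro allI impI)
        fix \<pi>0 assume b: "is_path M \<pi>0 \<and> \<pi>0 0 = last h"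
        then have e: "is_path M (ext h \<pi>0) \<and> hprefix h (ext h \<pi>0) \<and> suffix_from (ext h \<pi>0) ?N = \<pi>0"
          using path_extend[of h M \<pi>0] ne hc by blast
        then have "psat M (ext h \<pi>0) ?N r \<psi>" using H by simp
        then show "ipsat M \<pi>0 (IS M h r) (obs_of M h r) \<psi>"
          using IH[THEN spec[of _ "ext h \<pi>0"], THEN spec[of _ ?N], THEN spec[of _ r]] e st path_upto_prefix[OF _ ne] by simp
      qed
    next
      assume H: "isat M (last h) (IS M h r) (obs_of M h r) (Aq \<psi>)"
      show "hsat M h r (Aq \<psi>)"
      proof (simp only: hsat.simps, intro allI impI)
        fix \<pi> assume b: "is_path M \<pi> \<and> hprefix h \<pi>"
        have "is_path M (suffix_from \<pi> ?N)" using b unfolding is_path_def suffix_from_def by simp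
        moreover have "suffix_from \<pi> ?N 0 = last h" using b lastn ne
          unfolding suffix_from_def hprefix_def by simp
        ultimately have "ipsat M (suffix_from \<pi> ?N) (IS M h r) (obs_of M h r) \<psi>" using H by simp
        then show "psat M \<pi> ?N r \<psi>"
          using IH[THEN spec[of _ \<pi>], THEN spec[of _ ?N], THEN spec[of _ r]] b st path_upto_prefix[OF _ ne] by simp
      qed
    qed
  qed
next
  case (Kn \<phi>)
  show ?case
  proof (intro allI impI)
    fix h and r :: "'o obs_record" assume a: "is_history M h \<and> stops_at_hist r h"
    have eq: "hsat M h' r \<phi> \<longleftrightarrow> isat M (last h') (IS M h r) (obs_of M h r) \<phi>"
      if "is_history M h'" "hequiv M r h' h" for h'
    proof -
      have "stops_at_hist r h'" using a that(2) by (simp add: stops_at_hist_def hequiv_def)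
      then show ?thesis using Kn that IS_cong[OF wf that(2)] obs_cong[OF that(2)] by simp
    qed
    show "hsat M h r (Kn \<phi>) \<longleftrightarrow> isat M (last h) (IS M h r) (obs_of M h r) (Kn \<phi>)"
      using eq unfolding IS_def[of M h r] by auto
  qed
next
  case (Delta ob \<phi>)
  show ?case
  proof (intro allI impI)
    fix h and r :: "'o obs_record" assume a: "is_history M h \<and> stops_at_hist r h"
    have ne: "h \<noteq> []" using a hist_ne by blast
    have "stops_at_hist (r@[(ob,length h - 1)]) h" using stops_delta[of r "length h - 1" ob] a unfolding stops_at_hist_def by simp
    then have "hsat M h (r@[(ob,length h - 1)]) \<phi> \<longleftrightarrow> isat M (last h) (IS M h (r@[(ob,length h - 1)])) (obs_of M h (r@[(ob,length h - 1)])) \<phi>"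
      using Delta a by blast
    moreover have "obs_of M h (r@[(ob,length h - 1)]) = ob" by (rule obs_delta)
    moreover have "IS M h (r@[(ob,length h - 1)]) = UD M (IS M h r) (last h) ob" by (rule IS_delta[OF wf ne])
    ultimately show "hsat M h r (Delta ob \<phi>) \<longleftrightarrow> isat M (last h) (IS M h r) (obs_of M h r) (Delta ob \<phi>)"
      by (simp only: hsat.simps isat.simps)
  qed
next
  case (Hist \<phi>)
  show ?case
  proof (intro allI impI)
    fix \<pi> n and r :: "'o obs_record" assume a: "is_path M \<pi> \<and> stops_at r n"
    then have "is_history M (path_upto \<pi> n) \<and> stops_at_hist r (path_upto \<pi> n)"
      using path_upto_hist by (auto simp: stops_at_hist_def)
    then show "psat M \<pi> n r (Hist \<phi>) \<longleftrightarrow> ipsat M (suffix_from \<pi> n) (IS M (path_upto \<pi> n) r) (obs_of M (path_upto \<pi> n) r) (Hist \<phi>)"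
      using Hist by (simp add: suffix_from_def)
  qed
next
  case (PNot x)
  then show ?case by simp
next
  case (PAnd x1 x2)
  then show ?case by simp
next
  case (Nx \<psi>)
  show ?case
  proof (intro allI impI)
    fix \<pi> n and r :: "'o obs_record" assume a: "is_path M \<pi> \<and> stops_at r n"
    have u: "UTn M 1 (IS M (path_upto \<pi> n) r) (suffix_from \<pi> n) (obs_of M (path_upto \<pi> n) r)
           = IS M (path_upto \<pi> (n+1)) r \<and>
         obs_of M (path_upto \<pi> (n+1)) r = obs_of M (path_upto \<pi> n) r"
      using UTn_lemma[OF wf conjunct1[OF a] conjunct2[OF a], of 1] by blast
    have sf: "suffix_from (suffix_from \<pi> n) 1 = suffix_from \<pi> (Suc n)"
      by (auto simp: suffix_from_def)
    have "psat M \<pi> (Suc n) r \<psi> \<longleftrightarrow> ipsat M (suffix_from \<pi> (Suc n)) (IS M (path_upto \<pi> (Suc n)) r) (obs_of M (path_upto \<pi> (Suc n)) r) \<psi>"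
      using Nx a stops_Suc by blast
    then show "psat M \<pi> n r (Nx \<psi>) \<longleftrightarrow> ipsat M (suffix_from \<pi> n) (IS M (path_upto \<pi> n) r) (obs_of M (path_upto \<pi> n) r) (Nx \<psi>)"
      using u sf by simp
  qed
next
  case (Until \<psi>1 \<psi>2)
  show ?case
  proof (intro allI impI)
    fix \<pi> n and r :: "'o obs_record" assume a: "is_path M \<pi> \<and> stops_at r n"
    let ?I = "IS M (path_upto \<pi> n) r" and ?o = "obs_of M (path_upto \<pi> n) r"
    have sf: "suffix_from (suffix_from \<pi> n) j = suffix_from \<pi> (n+j)" for j
      by (auto simp: suffix_from_def add.commute add.left_commute)
    have e1: "psat M \<pi> (n+j) r \<psi>1 \<longleftrightarrow> ipsat M (suffix_from (suffix_from \<pi> n) j) (UTn M j ?I (suffix_from \<pi> n) ?o) ?o \<psi>1" for j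
      using Until(1) a stops_add UTn_lemma[OF wf conjunct1[OF a] conjunct2[OF a], of j] sf by metis
    have e2: "psat M \<pi> (n+j) r \<psi>2 \<longleftrightarrow> ipsat M (suffix_from (suffix_from \<pi> n) j) (UTn M j ?I (suffix_from \<pi> n) ?o) ?o \<psi>2" for j
      using Until(2) a stops_add UTn_lemma[OF wf conjunct1[OF a] conjunct2[OF a], of j] sf by metis
    have "psat M \<pi> n r (Until \<psi>1 \<psi>2) \<longleftrightarrow>
         (\<exists>j. psat M \<pi> (n+j) r \<psi>2 \<and> (\<forall>i<j. psat M \<pi> (n+i) r \<psi>1))"
    proof
      assume "psat M \<pi> n r (Until \<psi>1 \<psi>2)"
      then obtain m where m: "m \<ge> n" "psat M \<pi> m r \<psi>2" "\<forall>k. n \<le> k \<and> k < m \<longrightarrow> psat M \<pi> k r \<psi>1" by auto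
      then show "\<exists>j. psat M \<pi> (n+j) r \<psi>2 \<and> (\<forall>i<j. psat M \<pi> (n+i) r \<psi>1)"
        by (intro exI[of _ "m - n"]) auto
    next
      assume "\<exists>j. psat M \<pi> (n+j) r \<psi>2 \<and> (\<forall>i<j. psat M \<pi> (n+i) r \<psi>1)"
      then obtain j where j: "psat M \<pi> (n+j) r \<psi>2" "\<forall>i<j. psat M \<pi> (n+i) r \<psi>1" by blast
      have "\<forall>k. n \<le> k \<and> k < n+j \<longrightarrow> psat M \<pi> k r \<psi>1"
      proof (intro allI impI)
        fix k assume "n \<le> k \<and> k < n+j"
        then have "k - n < j" "n + (k - n) = k" by arith+
        then show "psat M \<pi> k r \<psi>1" using j(2)[rule_format, of "k-n"] by simp
      qed
      then have "\<exists>m\<ge>n. psat M \<pi> m r \<psi>2 \<and> (\<forall>k. n \<le> k \<and> k < m \<longrightarrow> psat M \<pi> k r \<psi>1)"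
        using j(1) le_add1 by blast
      then show "psat M \<pi> n r (Until \<psi>1 \<psi>2)" by (simp only: psat.simps)
    qed
    then show "psat M \<pi> n r (Until \<psi>1 \<psi>2) \<longleftrightarrow> ipsat M (suffix_from \<pi> n) ?I ?o (Until \<psi>1 \<psi>2)"
      using e1 e2 by simp
  qed
qed

theorem mainTheorem2:
  fixes M :: "('s, 'o::finite) model"
    and \<phi> :: "'o hform" and h :: "'s list" and r :: "'o obs_record"
  assumes "wf_model M"
    and "is_history M h"
    and "stops_at_hist r h"
  shows "hsat M h r \<phi> \<longleftrightarrow> isat M (last h) (IS M h r) (obs_of M h r) \<phi>"
  using main(1)[OF assms(1)] assms(2,3) by blast

end
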